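(* Let $A$ be an $n$-qubit algorithm with $A|0^n\rangle=\sum_{x\in\{0,1\}^n}\alpha_x|x\rangle$, let $f:\{0,1\}^n\to\{0,1\}$ partition the basis states into good states $G=\{x:f(x)=1\}$ and bad states $B=\{x:f(x)=0\}$, let $\hat{\mathcal{O}}_p$ be a bounded-error oracle for $f$ with $p\in(1/2,1)$, and let $\delta>0$. For an appropriate $k=O\big(\frac{2p}{(p-1/2)^2}\log(1/\delta)\big)$, let $\hat A$ be the circuit on registers $R_1$ ($n$ qubits), $R_{21},\dots,R_{2k}$ (one qubit each) and $R_{maj}$ (one qubit), all initialised to $|0\rangle$, that: applies $A$ to $R_1$; for $i=1,\dots,k$ applies $\hat{\mathcal{O}}_p$ to $R_1R_{2i}$; and finally applies a majority gate controlled on $R_1$, with inputs $R_{21},\dots,R_{2k}$, writing the majority value into $R_{maj}$. Then, ignoring the states of ancill\ae, $$\hat A|0^{n+k+1}\rangle=\sum_{x\in G}\alpha_x|x\rangle\big[\eta^g_{x0}|\cdots\rangle|0\rangle+\eta^g_{x1}|\cdots\rangle|1\rangle\big]+\sum_{x\in B}\alpha_x|x\rangle\big[\eta^b_{x0}|\cdots\rangle|0\rangle+\eta^b_{x1}|\cdots\rangle|1\rangle\big]$$ (the last qubit being $R_{maj}$, and $|\cdots\rangle$ denoting normalized states of the intermediate registers), such that $|\eta^g_{x0}|^2\le\delta$ and $|\eta^b_{x1}|^2\le\delta$ for all relevant $x$.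
   Context: A bounded-error oracle $\hat{\mathcal{O}}_p$ for $f$ (with $p\in(1/2,1)$) is a unitary acting on $|x\rangle|0\rangle$ ($x\in\{0,1\}^n$, one output qubit) as $|x\rangle|0\rangle\mapsto|x\rangle(a_{x,0}|0\rangle+a_{x,1}|1\rangle)$ with $|a_{x,f(x)}|^2\ge p$, i.e. it marks $x$ correctly with probability at least $p$. The majority gate sets the output bit to $1$ iff at least $k/2$ of its $k$ input bits are $1$. *)

theory Defs
  imports Complex_Main
begin

text \<open>Computational basis states of m qubits are bit strings of length m;
  a state (vector) is a function from bit strings to amplitudes, and an operator
  on m qubits is given by its matrix entries  U y x = <y|U|x>.\<close>

definition bits :: "nat \<Rightarrow> bool list set" where
  "bits m = {xs. length xs = m}"

definition unitary :: "nat \<Rightarrow> (bool list \<Rightarrow> bool list \<Rightarrow> complex) \<Rightarrow> bool" where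
  "unitary m U \<longleftrightarrow>
     (\<forall>x\<in>bits m. \<forall>x'\<in>bits m.
        (\<Sum>y\<in>bits m. cnj (U y x) * U y x') = (if x = x' then 1 else 0))"

definition ket0 :: "nat \<Rightarrow> bool list \<Rightarrow> complex" where
  "ket0 m = (\<lambda>y. if y = replicate m False then 1 else 0)"

definition sel :: "bool list \<Rightarrow> nat list \<Rightarrow> bool list" where
  "sel y ps = map (\<lambda>i. y ! i) ps"

definition put :: "bool list \<Rightarrow> nat list \<Rightarrow> bool list \<Rightarrow> bool list" where
  "put y ps z = foldl (\<lambda>acc (i, b). acc[i := b]) y (zip ps z)"

definition apply_on ::
  "nat list \<Rightarrow> (bool list \<Rightarrow> bool list \<Rightarrow> complex) \<Rightarrow> (bool list \<Rightarrow> complex) \<Rightarrow> bool list \<Rightarrow> complex" where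
  "apply_on ps G \<psi> y = (\<Sum>z\<in>bits (length ps). G (sel y ps) z * \<psi> (put y ps z))"

definition bounded_error_oracle ::
  "nat \<Rightarrow> (bool list \<Rightarrow> bool) \<Rightarrow> real \<Rightarrow> (bool list \<Rightarrow> bool list \<Rightarrow> complex) \<Rightarrow> bool" where
  "bounded_error_oracle n f p Orc \<longleftrightarrow>
     unitary (n + 1) Orc \<and>
     (\<forall>x\<in>bits n. \<forall>y\<in>bits n. \<forall>c. y \<noteq> x \<longrightarrow> Orc (y @ [c]) (x @ [False]) = 0) \<and>
     (\<forall>x\<in>bits n. p \<le> (cmod (Orc (x @ [f x]) (x @ [False])))\<^sup>2)"

definition majority :: "nat \<Rightarrow> bool list \<Rightarrow> bool" where
  "majority k bs \<longleftrightarrow> k \<le> 2 * length (filter id bs)"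

text \<open>Majority gate on k+1 qubits: |b_1..b_k>|c> \<mapsto> |b_1..b_k>|c xor maj(b)>.\<close>
definition maj_gate :: "nat \<Rightarrow> bool list \<Rightarrow> bool list \<Rightarrow> complex" where
  "maj_gate k y z =
     (if take k y = take k z \<and> y ! k = (z ! k \<noteq> majority k (take k z)) then 1 else 0)"

text \<open>The circuit \<hat>A: registers R1 = positions 0..n-1, R_{2i} = position n+i-1
  (i = 1..k), R_maj = position n+k; all initialised to 0.\<close>
definition A_hat ::
  "nat \<Rightarrow> nat \<Rightarrow> (bool list \<Rightarrow> bool list \<Rightarrow> complex) \<Rightarrow> (bool list \<Rightarrow> bool list \<Rightarrow> complex)
     \<Rightarrow> bool list \<Rightarrow> complex" where
  "A_hat n k A Orc =
     (let s1 = apply_on [0..<n] A (ket0 (n + k + 1));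
          s2 = foldl (\<lambda>\<psi> i. apply_on ([0..<n] @ [n + i]) Orc \<psi>) s1 [0..<k]
      in apply_on [n..<n + k + 1] (maj_gate k) s2)"

end

theory Submission
  imports Defs
begin


lemma finite_bits[simp]: "finite (bits m)"
proof -
  have "bits m = {xs. set xs \<subseteq> (UNIV::bool set) \<and> length xs = m}" by (auto simp: bits_def)
  thus ?thesis using finite_lists_length_eq[of "UNIV::bool set" m] by simp
qed

lemma card_bits: "card (bits m) = 2 ^ m"
proof -
  have "bits m = {xs. set xs \<subseteq> (UNIV::bool set) \<and> length xs = m}" by (auto simp: bits_def)
  thus ?thesis using card_lists_length_eq[of "UNIV::bool set" m] by simp
qed

lemma sum_collapse:
  assumes "finite S" "z0 \<in> S" "\<And>z. z \<in> S \<Longrightarrow> z \<noteq> z0 \<Longrightarrow> g z = 0"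
  shows "sum g S = g z0"
  using assms by (simp add: sum.remove sum.neutral)

lemma put_Cons: "put y (i#ps) (b#z) = put (y[i:=b]) ps z"
  by (simp add: put_def)

lemma put_snoc: "length z = length ps \<Longrightarrow> put y (ps@[i]) (z@[b]) = (put y ps z)[i:=b]"
  by (simp add: put_def)

lemma length_put[simp]: "length (put y ps z) = length y"
proof (induction ps arbitrary: y z)
  case Nil thus ?case by (simp add: put_def)
next
  case (Cons a ps) thus ?case by (cases z) (simp_all add: put_def)
qed

lemma put_upt: "m + length z \<le> length y \<Longrightarrow>
   put y [m..<m+length z] z = take m y @ z @ drop (m + length z) y"
proof (induction z arbitrary: m y)
  case Nil thus ?case by (simp add: put_def)
next
  case (Cons b z)
  have u: "[m..<m + length (b#z)] = m # [Suc m..<Suc m + length z]"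
    by (simp add: upt_rec)
  have "put y [m..<m + length (b#z)] (b#z) = put (y[m:=b]) [Suc m..<Suc m + length z] z"
    unfolding u by (rule put_Cons)
  also have "\<dots> = take (Suc m) (y[m:=b]) @ z @ drop (Suc m + length z) (y[m:=b])"
    using Cons.prems by (intro Cons.IH) simp
  also have "take (Suc m) (y[m:=b]) = take m y @ [b]"
    using Cons.prems by (simp add: take_Suc_conv_app_nth)
  finally show ?case using Cons.prems by simp
qed

lemma sel_upt: "m + l \<le> length y \<Longrightarrow> sel y [m..<m+l] = take l (drop m y)"
  by (rule nth_equalityI) (auto simp: sel_def)

lemma sel_snoc: "sel y (ps@[i]) = sel y ps @ [y!i]"
  by (simp add: sel_def)

definition psi :: "nat \<Rightarrow> (bool list \<Rightarrow> bool list \<Rightarrow> complex) \<Rightarrow> (bool list \<Rightarrow> bool list \<Rightarrow> complex) \<Rightarrow> nat \<Rightarrow> bool list \<Rightarrow> complex" where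
  "psi n A Orc i y = A (take n y) (replicate n False) *
     (if (\<forall>j. n + i \<le> j \<and> j < length y \<longrightarrow> \<not> y!j) then 1 else 0) *
     (\<Prod>j<i. Orc (take n y @ [y!(n+j)]) (take n y @ [False]))"

lemma rep_cond:
  assumes "length y = n + m"
  shows "(replicate n False @ drop n y = replicate (n+m) False) \<longleftrightarrow> (\<forall>j. n \<le> j \<and> j < length y \<longrightarrow> \<not> y!j)"
proof -
  have "(replicate n False @ drop n y = replicate (n+m) False) \<longleftrightarrow> drop n y = replicate m False"
    by (simp add: replicate_add)
  also have "\<dots> \<longleftrightarrow> (\<forall>b\<in>set (drop n y). b = False)"
  proof
    assume "drop n y = replicate m False" thus "\<forall>b\<in>set (drop n y). b = False" by simp
  next
    assume "\<forall>b\<in>set (drop n y). b = False"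
    thus "drop n y = replicate m False" using assms by (intro replicate_eqI) auto
  qed
  also have "\<dots> \<longleftrightarrow> (\<forall>j. n \<le> j \<and> j < length y \<longrightarrow> \<not> y!j)"
  proof
    assume H: "\<forall>b\<in>set (drop n y). b = False"
    show "\<forall>j. n \<le> j \<and> j < length y \<longrightarrow> \<not> y!j"
    proof (intro allI impI)
      fix j assume j: "n \<le> j \<and> j < length y"
      hence "drop n y ! (j - n) \<in> set (drop n y)" by (intro nth_mem) (simp add: diff_less_mono)
      moreover have "drop n y ! (j - n) = y ! j" using j by simp
      ultimately show "\<not> y!j" using H by auto
    qed
  next
    assume H: "\<forall>j. n \<le> j \<and> j < length y \<longrightarrow> \<not> y!j"
    show "\<forall>b\<in>set (drop n y). b = False"
    proof
      fix b assume "b \<in> set (drop n y)"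
      then obtain i where i: "i < length (drop n y)" "drop n y ! i = b" by (auto simp: in_set_conv_nth)
      thus "b = False" using H[rule_format, of "n+i"] by auto
    qed
  qed
  finally show ?thesis .
qed

lemma step0:
  assumes "length y = n + k + 1"
  shows "apply_on [0..<n] A (ket0 (n + k + 1)) y = psi n A Orc 0 y"
proof -
  have sel: "sel y [0..<n] = take n y" using sel_upt[of 0 n y] assms by simp
  have put: "put y [0..<n] z = z @ drop n y" if "z \<in> bits n" for z
    using put_upt[of 0 z y] that assms by (simp add: bits_def)
  have "apply_on [0..<n] A (ket0 (n + k + 1)) y
      = (\<Sum>z\<in>bits n. A (take n y) z * ket0 (n + k + 1) (z @ drop n y))"
    unfolding apply_on_def by (simp add: sel put)
  also have "\<dots> = A (take n y) (replicate n False) * ket0 (n + k + 1) (replicate n False @ drop n y)"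
  proof (rule sum_collapse)
    fix z assume z: "z \<in> bits n" "z \<noteq> replicate n False"
    have "z @ drop n y \<noteq> replicate (n + k + 1) False"
    proof
      assume "z @ drop n y = replicate (n + k + 1) False"
      hence "take n (z @ drop n y) = take n (replicate (n + k + 1) False)" by simp
      thus False using z by (simp add: bits_def del: replicate.simps)
    qed
    thus "A (take n y) z * ket0 (n + k + 1) (z @ drop n y) = 0" by (simp add: ket0_def)
  qed (simp, simp add: bits_def)
  also have "\<dots> = psi n A Orc 0 y"
    using rep_cond[of y n "k+1"] assms by (simp add: psi_def ket0_def add.assoc)
  finally show ?thesis .
qed

lemma snoc_split: "length z = Suc n \<Longrightarrow> z = take n z @ [z!n]"
  by (metis lessI take_Suc_conv_app_nth take_all order_refl)

lemma put_orc: "length z = Suc n \<Longrightarrow> n + i < length y \<Longrightarrow>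
   put y ([0..<n]@[n+i]) z = (take n z @ drop n y)[n+i := z!n]"
proof -
  assume z: "length z = Suc n" and l: "n + i < length y"
  have "put y ([0..<n]@[n+i]) z = put y ([0..<n]@[n+i]) (take n z @ [z!n])"
    using snoc_split[OF z] by simp
  also have "\<dots> = (put y [0..<n] (take n z))[n+i := z!n]"
    using z by (intro put_snoc) simp
  also have "put y [0..<n] (take n z) = take n z @ drop n y"
    using put_upt[of 0 "take n z" y] z l by simp
  finally show ?thesis .
qed

lemma step_orc:
  assumes bo: "bounded_error_oracle n f p Orc" and i: "i < k" and y: "length y = n+k+1"
    and psi_eq: "\<And>y'. length y' = n+k+1 \<Longrightarrow> \<psi> y' = psi n A Orc i y'"
  shows "apply_on ([0..<n]@[n+i]) Orc \<psi> y = psi n A Orc (Suc i) y"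
proof -
  define x where "x = take n y"
  have xb: "x \<in> bits n" using y by (simp add: x_def bits_def)
  have sel: "sel y ([0..<n]@[n+i]) = x @ [y!(n+i)]"
    using sel_upt[of 0 n y] y by (simp add: sel_snoc x_def)
  have "apply_on ([0..<n]@[n+i]) Orc \<psi> y
     = (\<Sum>z\<in>bits (Suc n). Orc (x@[y!(n+i)]) z * psi n A Orc i ((take n z @ drop n y)[n+i := z!n]))"
    unfolding apply_on_def
  proof (rule sum.cong)
    show "bits (length ([0..<n]@[n+i])) = bits (Suc n)" by simp
  next
    fix z assume z: "z \<in> bits (Suc n)"
    hence lz: "length z = Suc n" by (simp add: bits_def)
    have p: "put y ([0..<n]@[n+i]) z = (take n z @ drop n y)[n+i := z!n]"
      using put_orc[OF lz] y i by simp
    have "length ((take n z @ drop n y)[n+i := z!n]) = n+k+1" using lz y by simp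
    thus "Orc (sel y ([0..<n] @ [n + i])) z * \<psi> (put y ([0..<n] @ [n + i]) z) =
         Orc (x @ [y ! (n + i)]) z * psi n A Orc i ((take n z @ drop n y)[n + i := z ! n])"
      by (simp add: sel p psi_eq)
  qed
  also have "\<dots> = Orc (x@[y!(n+i)]) (x@[False]) * psi n A Orc i ((take n (x@[False]) @ drop n y)[n+i := (x@[False])!n])"
  proof (rule sum_collapse)
    show "x @ [False] \<in> bits (Suc n)" using xb by (simp add: bits_def)
  next
    fix z assume z: "z \<in> bits (Suc n)" "z \<noteq> x @ [False]"
    hence lz: "length z = Suc n" by (simp add: bits_def)
    show "Orc (x@[y!(n+i)]) z * psi n A Orc i ((take n z @ drop n y)[n+i := z!n]) = 0"
    proof (cases "z!n")
      case True
      let ?v = "(take n z @ drop n y)[n+i := z!n]"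
      have lv: "length ?v = length y" using lz y by simp
      have "?v ! (n+i) = True" using True lv i y by simp
      have "\<not> (\<forall>j. n + i \<le> j \<and> j < length ?v \<longrightarrow> \<not> ?v!j)"
      proof
        assume H: "\<forall>j. n + i \<le> j \<and> j < length ?v \<longrightarrow> \<not> ?v!j"
        have "n + i < length ?v" using lv i y by simp
        with H have "\<not> ?v!(n+i)" by blast
        thus False using \<open>?v ! (n+i) = True\<close> by simp
      qed
      hence "psi n A Orc i ?v = 0" unfolding psi_def by (simp only: if_False if_not_P mult_zero_right mult_zero_left)
      thus ?thesis by simp
    next
      case False
      have tnz: "take n z \<noteq> x"
      proof
        assume "take n z = x"
        hence "z = x @ [False]" using snoc_split[OF lz] \<open>\<not> z!n\<close> by simp
        with z(2) show False by simp
      qed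
      have tb: "take n z \<in> bits n" using lz by (simp add: bits_def)
      have H: "\<forall>x\<in>bits n. \<forall>y\<in>bits n. \<forall>c. y \<noteq> x \<longrightarrow> Orc (y @ [c]) (x @ [False]) = 0"
        using bo by (simp add: bounded_error_oracle_def)
      have "Orc (x@[y!(n+i)]) (take n z @ [False]) = 0"
        using H[rule_format, of "take n z" x "y!(n+i)"] xb tb tnz by auto
      moreover have "z = take n z @ [False]" using snoc_split[OF lz] False by simp
      ultimately show ?thesis by (metis mult_zero_left)
    qed
  qed simp
  also have "take n (x@[False]) @ drop n y = y" using xb by (simp add: bits_def x_def)
  also have "(x@[False])!n = False" using xb by (simp add: bits_def nth_append)
  also have "psi n A Orc i (y[n+i := False]) =
      A x (replicate n False) *
     (if (\<forall>j. n + Suc i \<le> j \<and> j < length y \<longrightarrow> \<not> y!j) then 1 else 0) *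
     (\<Prod>j<i. Orc (x @ [y!(n+j)]) (x @ [False]))"
  proof -
    have t: "take n (y[n+i := False]) = x" by (simp add: x_def)
    have c: "(\<forall>j. n + i \<le> j \<and> j < length (y[n+i := False]) \<longrightarrow> \<not> (y[n+i := False])!j)
        \<longleftrightarrow> (\<forall>j. n + Suc i \<le> j \<and> j < length y \<longrightarrow> \<not> y!j)"
    proof
      assume H: "\<forall>j. n + i \<le> j \<and> j < length (y[n+i := False]) \<longrightarrow> \<not> (y[n+i := False])!j"
      show "\<forall>j. n + Suc i \<le> j \<and> j < length y \<longrightarrow> \<not> y!j"
      proof (intro allI impI)
        fix j assume j: "n + Suc i \<le> j \<and> j < length y"
        hence "n + i \<le> j \<and> j < length (y[n+i := False])" by simp
        hence "\<not> (y[n+i := False])!j" using H by blast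
        moreover have "j \<noteq> n + i" using j by simp
        ultimately show "\<not> y!j" by simp
      qed
    next
      assume H: "\<forall>j. n + Suc i \<le> j \<and> j < length y \<longrightarrow> \<not> y!j"
      show "\<forall>j. n + i \<le> j \<and> j < length (y[n+i := False]) \<longrightarrow> \<not> (y[n+i := False])!j"
      proof (intro allI impI)
        fix j assume j: "n + i \<le> j \<and> j < length (y[n+i := False])"
        show "\<not> (y[n+i := False])!j"
        proof (cases "j = n + i")
          case True thus ?thesis using j by simp
        next
          case False
          hence "n + Suc i \<le> j" using j by simp
          thus ?thesis using H j False by simp
        qed
      qed
    qed
    have pr: "(\<Prod>j<i. Orc (x @ [(y[n+i := False])!(n+j)]) (x @ [False])) = (\<Prod>j<i. Orc (x @ [y!(n+j)]) (x @ [False]))"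
      by (intro prod.cong) (auto simp: nth_list_update)
    show ?thesis unfolding psi_def t c pr ..
  qed
  finally have "apply_on ([0..<n]@[n+i]) Orc \<psi> y = Orc (x@[y!(n+i)]) (x@[False]) *
     (A x (replicate n False) *
     (if (\<forall>j. n + Suc i \<le> j \<and> j < length y \<longrightarrow> \<not> y!j) then 1 else 0) *
     (\<Prod>j<i. Orc (x @ [y!(n+j)]) (x @ [False])))" .
  moreover have "psi n A Orc (Suc i) y = A x (replicate n False) *
     (if (\<forall>j. n + Suc i \<le> j \<and> j < length y \<longrightarrow> \<not> y!j) then 1 else 0) *
     ((\<Prod>j<i. Orc (x @ [y!(n+j)]) (x @ [False])) * Orc (x@[y!(n+i)]) (x@[False]))"
    unfolding psi_def x_def by (simp only: prod.lessThan_Suc add_Suc_right)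
  ultimately show ?thesis by (simp only: ac_simps)
qed

lemma fold_orc:
  assumes bo: "bounded_error_oracle n f p Orc"
  shows "i \<le> k \<Longrightarrow> \<forall>y. length y = n+k+1 \<longrightarrow>
    foldl (\<lambda>\<psi> i. apply_on ([0..<n] @ [n + i]) Orc \<psi>) (apply_on [0..<n] A (ket0 (n+k+1))) [0..<i] y
      = psi n A Orc i y"
proof (induction i)
  case 0 thus ?case using step0 by simp
next
  case (Suc i)
  hence IH: "\<And>y'. length y' = n+k+1 \<Longrightarrow>
    foldl (\<lambda>\<psi> i. apply_on ([0..<n] @ [n + i]) Orc \<psi>) (apply_on [0..<n] A (ket0 (n+k+1))) [0..<i] y'
      = psi n A Orc i y'" by simp
  show ?case
  proof (intro allI impI)
    fix y :: "bool list" assume y: "length y = n+k+1"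
    show "foldl (\<lambda>\<psi> i. apply_on ([0..<n] @ [n + i]) Orc \<psi>) (apply_on [0..<n] A (ket0 (n+k+1))) [0..<Suc i] y
      = psi n A Orc (Suc i) y"
      using step_orc[OF bo _ y, of i, OF _ IH] Suc.prems by simp
  qed
qed

lemma step_maj:
  assumes x: "length x = n" and w: "length w = k"
    and psi_eq: "\<And>y'. length y' = n+k+1 \<Longrightarrow> \<psi> y' = psi n A Orc k y'"
  shows "apply_on [n..<n+k+1] (maj_gate k) \<psi> (x@w@[c])
     = A x (replicate n False) * (if c = majority k w then 1 else 0) * (\<Prod>j<k. Orc (x@[w!j]) (x@[False]))"
proof -
  define m where "m = majority k w"
  have sel: "sel (x@w@[c]) [n..<n+k+1] = w@[c]"
    using sel_upt[of n "k+1" "x@w@[c]"] x w by simp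
  have put: "put (x@w@[c]) [n..<n+k+1] z = x @ z" if "z \<in> bits (k+1)" for z
    using put_upt[of n z "x@w@[c]"] x w that by (simp add: bits_def)
  have "apply_on [n..<n+k+1] (maj_gate k) \<psi> (x@w@[c])
      = (\<Sum>z\<in>bits (k+1). maj_gate k (w@[c]) z * psi n A Orc k (x @ z))"
    unfolding apply_on_def
  proof (rule sum.cong)
    show "bits (length [n..<n+k+1]) = bits (k+1)" by simp
  next
    fix z assume z: "z \<in> bits (k+1)"
    have "length (x@z) = n+k+1" using z x by (simp add: bits_def)
    thus "maj_gate k (sel (x @ w @ [c]) [n..<n + k + 1]) z * \<psi> (put (x @ w @ [c]) [n..<n + k + 1] z) =
         maj_gate k (w @ [c]) z * psi n A Orc k (x @ z)"
      using sel put[OF z] psi_eq by simp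
  qed
  also have "\<dots> = maj_gate k (w@[c]) (w@[c \<noteq> m]) * psi n A Orc k (x @ w @ [c \<noteq> m])"
  proof (rule sum_collapse)
    show "w @ [c \<noteq> m] \<in> bits (k+1)" using w by (simp add: bits_def)
  next
    fix z assume z: "z \<in> bits (k+1)" "z \<noteq> w @ [c \<noteq> m]"
    hence lz: "length z = Suc k" by (simp add: bits_def)
    have "\<not> (take k (w@[c]) = take k z \<and> (w@[c]) ! k = (z ! k \<noteq> majority k (take k z)))"
    proof
      assume H: "take k (w@[c]) = take k z \<and> (w@[c]) ! k = (z ! k \<noteq> majority k (take k z))"
      hence tk: "take k z = w" using w by simp
      hence "c = (z ! k \<noteq> m)" using H w by (simp add: m_def nth_append)
      hence "z ! k = (c \<noteq> m)" by blast
      hence "z = w @ [c \<noteq> m]" using snoc_split[OF lz] tk by simp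
      with z(2) show False by simp
    qed
    hence "maj_gate k (w@[c]) z = 0" unfolding maj_gate_def by (rule if_not_P)
    thus "maj_gate k (w@[c]) z * psi n A Orc k (x @ z) = 0" by simp
  qed simp
  also have "maj_gate k (w@[c]) (w@[c \<noteq> m]) = 1"
    using w by (simp add: maj_gate_def m_def nth_append) blast
  also have "psi n A Orc k (x @ w @ [c \<noteq> m])
     = A x (replicate n False) * (if c = m then 1 else 0) * (\<Prod>j<k. Orc (x@[w!j]) (x@[False]))"
  proof -
    have t: "take n (x @ w @ [c \<noteq> m]) = x" using x by simp
    have cnd: "(\<forall>j. n + k \<le> j \<and> j < length (x @ w @ [c \<noteq> m]) \<longrightarrow> \<not> (x @ w @ [c \<noteq> m])!j) \<longleftrightarrow> c = m"
    proof
      assume H: "\<forall>j. n + k \<le> j \<and> j < length (x @ w @ [c \<noteq> m]) \<longrightarrow> \<not> (x @ w @ [c \<noteq> m])!j"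
      have "\<not> (x @ w @ [c \<noteq> m])!(n+k)" using H x w by simp
      thus "c = m" using x w by (simp add: nth_append)
    next
      assume "c = m"
      thus "\<forall>j. n + k \<le> j \<and> j < length (x @ w @ [c \<noteq> m]) \<longrightarrow> \<not> (x @ w @ [c \<noteq> m])!j"
        using x w by (auto simp: nth_append)
    qed
    have pr: "(\<Prod>j<k. Orc (x @ [(x @ w @ [c \<noteq> m])!(n+j)]) (x @ [False])) = (\<Prod>j<k. Orc (x@[w!j]) (x@[False]))"
      using x w by (intro prod.cong) (auto simp: nth_append)
    show ?thesis unfolding psi_def t cnd pr ..
  qed
  finally show ?thesis by (simp add: m_def)
qed

lemma A_hat_formula:
  assumes bo: "bounded_error_oracle n f p Orc" and x: "length x = n" and w: "length w = k"
  shows "A_hat n k A Orc (x@w@[c])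
     = A x (replicate n False) * (if c = majority k w then 1 else 0) * (\<Prod>j<k. Orc (x@[w!j]) (x@[False]))"
  unfolding A_hat_def Let_def
  by (rule step_maj[OF x w]) (use fold_orc[OF bo, of k k A] in simp)


lemma pow_bound:
  fixes a b :: real
  assumes "0 \<le> a" "a \<le> b" "i \<le> j"
  shows "b^i * a^j \<le> sqrt (a*b)^(i+j)"
proof -
  have s0: "0 \<le> sqrt (a*b)" using assms by simp
  have aS: "a \<le> sqrt (a*b)"
  proof -
    have "sqrt (a*a) \<le> sqrt (a*b)" using assms by (intro real_sqrt_le_mono mult_left_mono) auto
    thus ?thesis using assms by simp
  qed
  have "b^i * a^j = (a*b)^i * a^(j-i)"
  proof -
    obtain d where d: "j = i + d" using assms(3) le_Suc_ex by blast
    show ?thesis unfolding d by (simp add: power_add power_mult_distrib ac_simps)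
  qed
  also have "(a*b)^i = sqrt (a*b)^(2*i)"
    using assms by (simp add: power_mult)
  also have "a^(j-i) \<le> sqrt (a*b)^(j-i)" using assms aS by (intro power_mono) auto
  hence "sqrt (a*b)^(2*i) * a^(j-i) \<le> sqrt (a*b)^(2*i) * sqrt (a*b)^(j-i)"
    using s0 by (intro mult_left_mono) auto
  also have "sqrt (a*b)^(2*i) * sqrt (a*b)^(j-i) = sqrt (a*b)^(i+j)"
    using assms(3) by (simp add: power_add[symmetric])
  finally show ?thesis .
qed

lemma prob_bound:
  fixes p r \<delta> :: real and m :: nat
  assumes p: "1/2 < p" "p < 1" and r: "p \<le> r" "r \<le> 1" and d: "0 < \<delta>"
    and m: "ln (1/\<delta>) / (4*(p-1/2)^2) \<le> real m"
  shows "2^(2*m) * sqrt ((1-r)*r)^(2*m) \<le> \<delta>"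
proof -
  have r1: "0 \<le> (1-r)*r" using r p by simp
  have "2^(2*m) * sqrt ((1-r)*r)^(2*m) = (4*((1-r)*r))^m"
    using r1 by (simp add: power_mult power_mult_distrib)
  also have "\<dots> \<le> (1 - 4*(p-1/2)^2)^m"
  proof (rule power_mono)
    have "4*((1-r)*r) - (1 - 4*(p-1/2)^2) = 4*(r-p)*(1-r-p)"
      by (simp add: algebra_simps power2_eq_square)
    moreover have "4*(r-p)*(1-r-p) \<le> 0"
      using r p by (intro mult_nonneg_nonpos) auto
    ultimately show "4*((1-r)*r) \<le> 1 - 4*(p-1/2)^2" by linarith
  qed (use r1 in simp)
  also have "\<dots> \<le> exp (-(4*(p-1/2)^2))^m"
  proof (rule power_mono)
    show "1 - 4*(p-1/2)^2 \<le> exp (-(4*(p-1/2)^2))"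
      using exp_ge_add_one_self[of "-(4*(p-1/2)^2)"] by simp
    have "(p-1/2)^2 \<le> (1/2)^2" using p by (intro power_mono) auto
    hence "4*(p-1/2)^2 \<le> 4*(1/2)^2" by simp
    thus "0 \<le> 1 - 4*(p-1/2)^2" by (simp add: power2_eq_square)
  qed
  also have "\<dots> = exp (-(4*(p-1/2)^2 * real m))"
    by (simp add: exp_of_nat_mult[symmetric] mult.commute)
  also have "\<dots> \<le> exp (- ln (1/\<delta>))"
  proof -
    have e: "0 < 4*(p-1/2)^2" using p by simp
    have "ln (1/\<delta>) \<le> 4*(p-1/2)^2 * real m"
      using m e by (simp add: divide_le_eq mult.commute)
    thus ?thesis by simp
  qed
  also have "\<dots> = \<delta>" using d by (simp add: ln_div)
  finally show ?thesis .
qed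

lemma k_bound:
  fixes p \<delta> :: real
  assumes p: "1/2 < p" "p < 1"
  defines "L \<equiv> max 1 (ln (1/\<delta>))"
  defines "m \<equiv> nat \<lceil>L / (4*(p-1/2)^2)\<rceil>"
  shows "real (2*m) \<le> 1 * (2 * p / (p - 1/2)\<^sup>2) * L"
    and "ln (1/\<delta>) / (4*(p-1/2)^2) \<le> real m"
proof -
  define e where "e = (p-1/2)^2"
  have e0: "0 < e" using p by (simp add: e_def)
  have e1: "e < 1/4"
  proof -
    have "(p-1/2)^2 < (1/2)^2" using p by (intro power_strict_mono) auto
    thus ?thesis by (simp add: e_def power2_eq_square)
  qed
  have L1: "1 \<le> L" by (simp add: L_def)
  have "real m = of_int \<lceil>L / (4*e)\<rceil>" using L1 e0 by (simp add: m_def e_def)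
  hence mb: "L/(4*e) \<le> real m" "real m \<le> L/(4*e) + 1" by linarith+
  show "ln (1/\<delta>) / (4*(p-1/2)^2) \<le> real m"
    using mb(1) e0 unfolding e_def[symmetric] L_def
    by (smt (verit) divide_right_mono max.cobounded2)
  have a: "L/(2*e) \<ge> 2"
  proof -
    have "2 * (2*e) \<le> L" using e1 L1 by linarith
    thus ?thesis using e0 by (simp add: le_divide_eq)
  qed
  have "real (2*m) \<le> L/(2*e) + 2" using mb(2) e0 by (simp add: field_simps)
  also have "\<dots> \<le> L/e" using a e0 by (simp add: field_simps)
  also have "\<dots> \<le> (2*p/e) * L"
  proof -
    have "L/e = (1/e)*L" by simp
    also have "\<dots> \<le> (2*p/e)*L" using p e0 L1 by (intro mult_right_mono divide_right_mono) auto
    finally show ?thesis .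
  qed
  finally show "real (2*m) \<le> 1 * (2 * p / (p - 1/2)\<^sup>2) * L" by (simp add: e_def)
qed

lemma prod_count:
  fixes g :: "bool \<Rightarrow> real"
  shows "(\<Prod>j<length w. g (w!j)) = g True ^ length (filter id w) * g False ^ length (filter Not w)"
proof (induction w)
  case Nil thus ?case by simp
next
  case (Cons b w)
  have "(\<Prod>j<length (b#w). g ((b#w)!j)) = g b * (\<Prod>j<length w. g (w!j))"
    by (simp only: length_Cons prod.lessThan_Suc_shift nth_Cons_Suc nth_Cons_0)
  thus ?case using Cons by (cases b) (simp_all add: ac_simps)
qed

lemma count_split: "length (filter id w) + length (filter Not w) = length w"
  using sum_length_filter_compl[of id w] by (simp add: comp_def)

lemma S_bound:
  fixes q p \<delta> :: real and m k :: nat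
  assumes p: "1/2 < p" "p < 1" and d: "0 < \<delta>"
    and m: "ln (1/\<delta>) / (4*(p-1/2)^2) \<le> real m" and k: "k = 2*m"
    and q: "0 \<le> q" "q \<le> 1"
    and c: "(c = False \<and> p \<le> q) \<or> (c = True \<and> p \<le> 1-q)"
  shows "(\<Sum>w\<in>bits k. if majority k w = c then q ^ length (filter id w) * (1-q)^length (filter Not w) else 0) \<le> \<delta>"
proof -
  define s where "s = sqrt ((1-q)*q)"
  have s0: "0 \<le> s" using q by (simp add: s_def)
  have tm: "(if majority k w = c then q ^ length (filter id w) * (1-q)^length (filter Not w) else 0) \<le> s^k"
    if w: "w \<in> bits k" for w
  proof (cases "majority k w = c")
    case False thus ?thesis using s0 by simp
  next
    case True
    define t where "t = length (filter id w)"
    define u where "u = length (filter Not w)"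
    have tu: "t + u = k" using count_split[of w] w by (simp add: t_def u_def bits_def)
    show ?thesis
    proof (cases c)
      case False
      hence "\<not> k \<le> 2*t" using True by (simp add: majority_def t_def)
      hence "t \<le> u" using tu by simp
      moreover have "1-q \<le> q" using c False p by simp
      ultimately have "q^t * (1-q)^u \<le> sqrt ((1-q)*q)^(t+u)" using q by (intro pow_bound) auto
      thus ?thesis using True tu by (simp add: s_def t_def u_def)
    next
      case cT: True
      hence "k \<le> 2*t" using True by (simp add: majority_def t_def)
      hence "u \<le> t" using tu by simp
      moreover have "q \<le> 1-q" using c cT p by simp
      ultimately have "(1-q)^u * q^t \<le> sqrt (q*(1-q))^(u+t)" using q by (intro pow_bound) auto
      thus ?thesis using True tu by (simp add: s_def t_def u_def ac_simps)
    qed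
  qed
  have "(\<Sum>w\<in>bits k. if majority k w = c then q ^ length (filter id w) * (1-q)^length (filter Not w) else 0)
      \<le> (\<Sum>w\<in>bits k. s^k)" by (intro sum_mono tm)
  also have "\<dots> = 2^(2*m) * s^(2*m)" by (simp add: card_bits k)
  also have "\<dots> \<le> \<delta>"
  proof (cases c)
    case False
    thus ?thesis unfolding s_def using prob_bound[OF p _ _ d m, of q] c q by simp
  next
    case True
    hence "p \<le> 1-q" using c by simp
    thus ?thesis unfolding s_def using prob_bound[OF p _ _ d m, of "1-q"] q by (simp add: ac_simps)
  qed
  finally show ?thesis .
qed

lemma orc_norm:
  assumes bo: "bounded_error_oracle n f p Orc" and x: "x \<in> bits n"
  shows "(cmod (Orc (x@[False]) (x@[False])))\<^sup>2 + (cmod (Orc (x@[True]) (x@[False])))\<^sup>2 = 1"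
proof -
  have u: "unitary (n+1) Orc" using bo by (simp add: bounded_error_oracle_def)
  have H: "\<forall>x\<in>bits n. \<forall>y\<in>bits n. \<forall>c. y \<noteq> x \<longrightarrow> Orc (y @ [c]) (x @ [False]) = 0"
    using bo by (simp add: bounded_error_oracle_def)
  have xb: "x @ [False] \<in> bits (n+1)" using x by (simp add: bits_def)
  have "(\<Sum>y\<in>bits (n+1). cnj (Orc y (x@[False])) * Orc y (x@[False])) = 1"
    using u xb unfolding unitary_def by auto
  also have "(\<Sum>y\<in>bits (n+1). cnj (Orc y (x@[False])) * Orc y (x@[False]))
     = (\<Sum>y\<in>{x@[False], x@[True]}. cnj (Orc y (x@[False])) * Orc y (x@[False]))"
  proof (rule sum.mono_neutral_right)
    show "{x@[False], x@[True]} \<subseteq> bits (n+1)" using x by (simp add: bits_def)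
  next
    show "\<forall>y\<in>bits (n+1) - {x@[False], x@[True]}. cnj (Orc y (x@[False])) * Orc y (x@[False]) = 0"
    proof
      fix y assume y: "y \<in> bits (n+1) - {x@[False], x@[True]}"
      hence ly: "length y = Suc n" by (simp add: bits_def)
      have "take n y \<noteq> x"
      proof
        assume "take n y = x"
        hence "y = x @ [y!n]" using snoc_split[OF ly] by simp
        with y show False by (cases "y!n") auto
      qed
      moreover have "take n y \<in> bits n" using ly by (simp add: bits_def)
      ultimately have "Orc (take n y @ [y!n]) (x @ [False]) = 0" using H x by blast
      hence "Orc y (x@[False]) = 0" using snoc_split[OF ly] by metis
      thus "cnj (Orc y (x@[False])) * Orc y (x@[False]) = 0" by simp
    qed
  qed simp
  also have "\<dots> = cnj (Orc (x@[False]) (x@[False])) * Orc (x@[False]) (x@[False])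
      + cnj (Orc (x@[True]) (x@[False])) * Orc (x@[True]) (x@[False])" by simp
  also have "\<dots> = complex_of_real ((cmod (Orc (x@[False]) (x@[False])))\<^sup>2 + (cmod (Orc (x@[True]) (x@[False])))\<^sup>2)"
    by (simp only: of_real_add complex_norm_square mult.commute)
  finally show ?thesis using of_real_eq_1_iff by blast
qed

theorem lemma2:
  shows "\<exists>C::real. C > 0 \<and>
    (\<forall>(n::nat) (A::bool list \<Rightarrow> bool list \<Rightarrow> complex) (f::bool list \<Rightarrow> bool) (p::real) (\<delta>::real)
        (Orc::bool list \<Rightarrow> bool list \<Rightarrow> complex).
      unitary n A \<and> 1/2 < p \<and> p < 1 \<and> bounded_error_oracle n f p Orc \<and> 0 < \<delta> \<longrightarrow>
      (\<exists>k::nat. real k \<le> C * (2 * p / (p - 1/2)\<^sup>2) * max 1 (ln (1 / \<delta>)) \<and>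
        (\<exists>(\<eta>::bool list \<Rightarrow> bool \<Rightarrow> complex) (\<phi>::bool list \<Rightarrow> bool \<Rightarrow> bool list \<Rightarrow> complex).
          (\<forall>x\<in>bits n. \<forall>c. (\<Sum>w\<in>bits k. (cmod (\<phi> x c w))\<^sup>2) = 1) \<and>
          (\<forall>x\<in>bits n. \<forall>w\<in>bits k. \<forall>c.
              A_hat n k A Orc (x @ w @ [c]) = A x (replicate n False) * \<eta> x c * \<phi> x c w) \<and>
          (\<forall>x\<in>bits n. f x \<longrightarrow> (cmod (\<eta> x False))\<^sup>2 \<le> \<delta>) \<and>
          (\<forall>x\<in>bits n. \<not> f x \<longrightarrow> (cmod (\<eta> x True))\<^sup>2 \<le> \<delta>))))"
proof (intro exI[of _ "1::real"] conjI allI impI)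
  show "(1::real) > 0" by simp
next
  fix n :: nat and A :: "bool list \<Rightarrow> bool list \<Rightarrow> complex" and f :: "bool list \<Rightarrow> bool"
    and p \<delta> :: real and Orc :: "bool list \<Rightarrow> bool list \<Rightarrow> complex"
  assume H: "unitary n A \<and> 1/2 < p \<and> p < 1 \<and> bounded_error_oracle n f p Orc \<and> 0 < \<delta>"
  hence p1: "1/2 < p" and p2: "p < 1" and bo: "bounded_error_oracle n f p Orc" and d: "0 < \<delta>" by auto
  define m where "m = nat \<lceil>max 1 (ln (1/\<delta>)) / (4*(p-1/2)^2)\<rceil>"
  have kb: "real (2*m) \<le> 1 * (2 * p / (p - 1/2)\<^sup>2) * max 1 (ln (1/\<delta>))"
    and mb: "ln (1/\<delta>) / (4*(p-1/2)^2) \<le> real m"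
    using k_bound[OF p1 p2, of \<delta>] unfolding m_def by simp_all
  define k where "k = 2*m"
  define a where "a x b = Orc (x@[b]) (x@[False])" for x b
  define g where "g x w = (\<Prod>j<k. (cmod (a x (w!j)))^2)" for x w
  define S where "S x c = (\<Sum>w\<in>bits k. if majority k w = c then g x w else 0)" for x c
  define \<eta> where "\<eta> x c = complex_of_real (sqrt (S x c))" for x c
  define \<phi> where "\<phi> x c w = (if S x c = 0 then (if w = replicate k False then 1 else 0)
      else (if majority k w = c then (\<Prod>j<k. a x (w!j)) / complex_of_real (sqrt (S x c)) else 0))" for x c w
  have g0: "0 \<le> g x w" for x w by (simp add: g_def prod_nonneg)
  have S0: "0 \<le> S x c" for x c by (simp add: S_def g0 sum_nonneg)
  have gP: "(cmod (\<Prod>j<k. a x (w!j)))^2 = g x w" for x w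
    by (simp add: g_def prod_norm[symmetric] prod_power_distrib)
  have Sg: "g x w = 0" if "S x c = 0" "w \<in> bits k" "majority k w = c" for x w c
  proof -
    have "\<forall>w\<in>bits k. (if majority k w = c then g x w else 0) = 0"
      using that(1) unfolding S_def by (subst sum_nonneg_eq_0_iff[symmetric]) (auto simp: g0)
    thus ?thesis using that by auto
  qed
  have eta2: "(cmod (\<eta> x c))^2 = S x c" for x c by (simp add: \<eta>_def S0)
  have Sq: "S x c = (\<Sum>w\<in>bits k. if majority k w = c then
      ((cmod (a x True))^2) ^ length (filter id w) * (1 - (cmod (a x True))^2) ^ length (filter Not w) else 0)"
    if x: "x \<in> bits n" for x c
    unfolding S_def
  proof (rule sum.cong)
    fix w assume w: "w \<in> bits k"
    have nrm: "1 - (cmod (a x True))^2 = (cmod (a x False))^2"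
      using orc_norm[OF bo x] by (simp add: a_def)
    have "g x w = (\<Prod>j<length w. (\<lambda>b. (cmod (a x b))^2) (w!j))"
      using w by (simp add: g_def bits_def)
    also have "\<dots> = ((cmod (a x True))^2) ^ length (filter id w) * ((cmod (a x False))^2) ^ length (filter Not w)"
      by (rule prod_count)
    finally show "(if majority k w = c then g x w else 0) = (if majority k w = c then
      ((cmod (a x True))^2) ^ length (filter id w) * (1 - (cmod (a x True))^2) ^ length (filter Not w) else 0)"
      by (simp add: nrm)
  qed simp
  have qb: "0 \<le> (cmod (a x True))^2" "(cmod (a x True))^2 \<le> 1" if x: "x \<in> bits n" for x
    using orc_norm[OF bo x] by (simp_all add: a_def) (smt (verit) zero_le_power2)
  have pf: "p \<le> (cmod (a x (f x)))^2" if x: "x \<in> bits n" for x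
    using bo x by (simp add: bounded_error_oracle_def a_def)
  show "\<exists>k. real k \<le> 1 * (2 * p / (p - 1/2)\<^sup>2) * max 1 (ln (1 / \<delta>)) \<and>
        (\<exists>(\<eta>::bool list \<Rightarrow> bool \<Rightarrow> complex) (\<phi>::bool list \<Rightarrow> bool \<Rightarrow> bool list \<Rightarrow> complex).
          (\<forall>x\<in>bits n. \<forall>c. (\<Sum>w\<in>bits k. (cmod (\<phi> x c w))\<^sup>2) = 1) \<and>
          (\<forall>x\<in>bits n. \<forall>w\<in>bits k. \<forall>c.
              A_hat n k A Orc (x @ w @ [c]) = A x (replicate n False) * \<eta> x c * \<phi> x c w) \<and>
          (\<forall>x\<in>bits n. f x \<longrightarrow> (cmod (\<eta> x False))\<^sup>2 \<le> \<delta>) \<and>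
          (\<forall>x\<in>bits n. \<not> f x \<longrightarrow> (cmod (\<eta> x True))\<^sup>2 \<le> \<delta>))"
  proof (intro exI[of _ k] exI[of _ \<eta>] exI[of _ \<phi>] conjI ballI allI impI)
    show "real k \<le> 1 * (2 * p / (p - 1/2)\<^sup>2) * max 1 (ln (1 / \<delta>))" using kb by (simp add: k_def)
  next
    fix x c assume x: "x \<in> bits n"
    show "(\<Sum>w\<in>bits k. (cmod (\<phi> x c w))\<^sup>2) = 1"
    proof (cases "S x c = 0")
      case True
      have "(\<Sum>w\<in>bits k. (cmod (\<phi> x c w))\<^sup>2) = (\<Sum>w\<in>bits k. if w = replicate k False then 1 else 0)"
        by (rule sum.cong) (auto simp: \<phi>_def True)
      also have "\<dots> = 1" by (subst sum.delta) (simp, simp add: bits_def)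
      finally show ?thesis .
    next
      case False
      hence Sp: "0 < S x c" using S0[of x c] by simp
      have "(\<Sum>w\<in>bits k. (cmod (\<phi> x c w))\<^sup>2) = (\<Sum>w\<in>bits k. (if majority k w = c then g x w else 0) / S x c)"
      proof (rule sum.cong)
        fix w assume "w \<in> bits k"
        show "(cmod (\<phi> x c w))\<^sup>2 = (if majority k w = c then g x w else 0) / S x c"
          using Sp False by (simp add: \<phi>_def norm_divide power_divide gP[symmetric])
      qed simp
      also have "\<dots> = S x c / S x c" by (simp only: sum_divide_distrib[symmetric] S_def)
      also have "\<dots> = 1" using Sp by simp
      finally show ?thesis .
    qed
  next
    fix x w c assume x: "x \<in> bits n" and w: "w \<in> bits k"
    have F: "A_hat n k A Orc (x@w@[c]) = A x (replicate n False) * (if c = majority k w then 1 else 0) * (\<Prod>j<k. a x (w!j))"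
      using A_hat_formula[OF bo, of x w k A c] x w by (simp add: bits_def a_def)
    show "A_hat n k A Orc (x @ w @ [c]) = A x (replicate n False) * \<eta> x c * \<phi> x c w"
    proof (cases "S x c = 0")
      case True
      have "(if c = majority k w then 1 else 0) * (\<Prod>j<k. a x (w!j)) = 0"
      proof (cases "majority k w = c")
        case True2: True
        hence "g x w = 0" using Sg[OF True w] by simp
        hence "(cmod (\<Prod>j<k. a x (w!j)))^2 = 0" using gP by simp
        thus ?thesis by simp
      qed auto
      thus ?thesis using F True by (simp add: \<eta>_def)
    next
      case False
      hence Sp: "0 < S x c" using S0[of x c] by simp
      thus ?thesis using F False by (auto simp: \<eta>_def \<phi>_def)
    qed
  next
    fix x assume x: "x \<in> bits n" and fx: "f x"
    have "(cmod (\<eta> x False))\<^sup>2 = S x False" by (rule eta2)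
    also have "\<dots> \<le> \<delta>" unfolding Sq[OF x]
      by (rule S_bound[OF p1 p2 d mb k_def qb[OF x]]) (use pf[OF x] fx in simp)
    finally show "(cmod (\<eta> x False))\<^sup>2 \<le> \<delta>" .
  next
    fix x assume x: "x \<in> bits n" and fx: "\<not> f x"
    have nrm: "1 - (cmod (a x True))^2 = (cmod (a x False))^2"
      using orc_norm[OF bo x] by (simp add: a_def)
    have "(cmod (\<eta> x True))\<^sup>2 = S x True" by (rule eta2)
    also have "\<dots> \<le> \<delta>" unfolding Sq[OF x]
      by (rule S_bound[OF p1 p2 d mb k_def qb[OF x]]) (use pf[OF x] fx nrm in simp)
    finally show "(cmod (\<eta> x True))\<^sup>2 \<le> \<delta>" .
  qed
qed

end
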